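(* Let $q$ be a self-join-free Boolean conjunctive query, let $q_0\subseteq q$, and let $\mathbf{db}$ be a database. If $\mathbf{o}_1$ and $\mathbf{o}_2$ are garbage sets for $q_0$ in $\mathbf{db}$, then $\mathbf{o}_1\cup\mathbf{o}_2$ is a garbage set for $q_0$ in $\mathbf{db}$.
   Context: Every relation name has a signature $[n,k]$ ($1\le k\le n$; primary-key positions $1,\dots,k$) and a mode in $\{\mathsf{c},\mathsf{i}\}$. Facts are variable-free atoms; facts are key-equal if same relation name and same primary-key values. A database is a finite set of facts with no two distinct key-equal facts of mode $\mathsf{c}$, all of whose relation names occur in $q$. The block of a fact $A$ in $\mathbf{db}$ is the set of facts of $\mathbf{db}$ key-equal to $A$. A repair of a set of facts is a maximal subset without two distinct key-equal facts. A self-join-free Boolean conjunctive query is a finite set of atoms with distinct relation names; for a fact $A$, $\mathrm{atom}(A)$ is the atom of $q$ with the same relation name; valuations are extended as the identity on constants. A subset $\mathbf{o}\subseteq\mathbf{db}$ is a garbage set for $q_0$ in $\mathbf{db}$ if (1) for every $A\in\mathbf{o}$, $\mathrm{atom}(A)\in q_0$ and the block of $A$ in $\mathbf{db}$ is included in $\mathbf{o}$; and (2) there is a repair $\mathbf{r}$ of $\mathbf{o}$ such that for every valuation $\theta$ of the variables of $q$, if $\theta(q)\subseteq(\mathbf{db}\setminus\mathbf{o})\cup\mathbf{r}$ then $\theta(q_0)\cap\mathbf{r}=\emptyset$. *)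

theory Defs
  imports Main
begin

text \<open>Modes of relation names: c (consistent) and i (inconsistent).\<close>
datatype mode = ModeC | ModeI

record 'r schema =
  arity  :: "'r \<Rightarrow> nat"
  keylen :: "'r \<Rightarrow> nat"
  rmode  :: "'r \<Rightarrow> mode"

definition wf_schema :: "'r schema \<Rightarrow> bool" where
  "wf_schema S \<longleftrightarrow> (\<forall>R. 1 \<le> keylen S R \<and> keylen S R \<le> arity S R)"

datatype ('v, 'c) trm = Var 'v | Cst 'c

type_synonym ('r, 'v, 'c) atom = "'r \<times> ('v, 'c) trm list"
type_synonym ('r, 'c) fact = "'r \<times> 'c list"

definition wf_atom :: "'r schema \<Rightarrow> ('r, 'v, 'c) atom \<Rightarrow> bool" where
  "wf_atom S a \<longleftrightarrow> length (snd a) = arity S (fst a)"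

definition wf_fact :: "'r schema \<Rightarrow> ('r, 'c) fact \<Rightarrow> bool" where
  "wf_fact S A \<longleftrightarrow> length (snd A) = arity S (fst A)"

definition key_equal :: "'r schema \<Rightarrow> ('r, 'c) fact \<Rightarrow> ('r, 'c) fact \<Rightarrow> bool" where
  "key_equal S A B \<longleftrightarrow> fst A = fst B \<and>
     take (keylen S (fst A)) (snd A) = take (keylen S (fst B)) (snd B)"

definition sjf_query :: "'r schema \<Rightarrow> ('r, 'v, 'c) atom set \<Rightarrow> bool" where
  "sjf_query S q \<longleftrightarrow> finite q \<and> (\<forall>a\<in>q. wf_atom S a) \<and>
     (\<forall>a\<in>q. \<forall>b\<in>q. fst a = fst b \<longrightarrow> a = b)"

definition is_database :: "'r schema \<Rightarrow> ('r, 'v, 'c) atom set \<Rightarrow> ('r, 'c) fact set \<Rightarrow> bool" where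
  "is_database S q db \<longleftrightarrow> finite db \<and> (\<forall>A\<in>db. wf_fact S A) \<and>
     (\<forall>A\<in>db. \<forall>B\<in>db. key_equal S A B \<and> A \<noteq> B \<longrightarrow> rmode S (fst A) \<noteq> ModeC) \<and>
     (\<forall>A\<in>db. \<exists>a\<in>q. fst a = fst A)"

definition block :: "'r schema \<Rightarrow> ('r, 'c) fact \<Rightarrow> ('r, 'c) fact set \<Rightarrow> ('r, 'c) fact set" where
  "block S A db = {B \<in> db. key_equal S B A}"

definition consistent :: "'r schema \<Rightarrow> ('r, 'c) fact set \<Rightarrow> bool" where
  "consistent S r \<longleftrightarrow> (\<forall>A\<in>r. \<forall>B\<in>r. key_equal S A B \<longrightarrow> A = B)"

definition is_repair :: "'r schema \<Rightarrow> ('r, 'c) fact set \<Rightarrow> ('r, 'c) fact set \<Rightarrow> bool" where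
  "is_repair S r s \<longleftrightarrow> r \<subseteq> s \<and> consistent S r \<and>
     (\<forall>r'. r \<subset> r' \<and> r' \<subseteq> s \<longrightarrow> \<not> consistent S r')"

fun val_trm :: "('v \<Rightarrow> 'c) \<Rightarrow> ('v, 'c) trm \<Rightarrow> 'c" where
  "val_trm \<theta> (Var x) = \<theta> x"
| "val_trm \<theta> (Cst c) = c"

definition val_atom :: "('v \<Rightarrow> 'c) \<Rightarrow> ('r, 'v, 'c) atom \<Rightarrow> ('r, 'c) fact" where
  "val_atom \<theta> a = (fst a, map (val_trm \<theta>) (snd a))"

definition val_query :: "('v \<Rightarrow> 'c) \<Rightarrow> ('r, 'v, 'c) atom set \<Rightarrow> ('r, 'c) fact set" where
  "val_query \<theta> q = val_atom \<theta> ` q"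

definition atom_of :: "('r, 'v, 'c) atom set \<Rightarrow> ('r, 'c) fact \<Rightarrow> ('r, 'v, 'c) atom" where
  "atom_of q A = (THE a. a \<in> q \<and> fst a = fst A)"

definition garbage_set ::
  "'r schema \<Rightarrow> ('r, 'v, 'c) atom set \<Rightarrow> ('r, 'v, 'c) atom set \<Rightarrow> ('r, 'c) fact set
     \<Rightarrow> ('r, 'c) fact set \<Rightarrow> bool" where
  "garbage_set S q q0 db ob \<longleftrightarrow> ob \<subseteq> db \<and>
     (\<forall>A\<in>ob. atom_of q A \<in> q0 \<and> block S A db \<subseteq> ob) \<and>
     (\<exists>r. is_repair S r ob \<and>
        (\<forall>\<theta>::'v \<Rightarrow> 'c. val_query \<theta> q \<subseteq> (db - ob) \<union> r \<longrightarrow> val_query \<theta> q0 \<inter> r = {}))"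

end

theory Submission
  imports Defs
begin

lemma ke_sym: "key_equal S A B \<Longrightarrow> key_equal S B A"
  unfolding key_equal_def by auto

lemma ke_refl: "key_equal S A A"
  unfolding key_equal_def by auto

lemma repair_cover:
  assumes "is_repair S r s" "A \<in> s"
  shows "\<exists>B\<in>r. key_equal S A B"
proof (rule ccontr)
  assume n: "\<not> (\<exists>B\<in>r. key_equal S A B)"
  then have "A \<notin> r" using ke_refl by blast
  then have "r \<subset> insert A r" by blast
  moreover have "insert A r \<subseteq> s" using assms unfolding is_repair_def by blast
  moreover have "consistent S (insert A r)"
    unfolding consistent_def
  proof (intro ballI impI)
    fix X Y assume X: "X \<in> insert A r" and Y: "Y \<in> insert A r" and k: "key_equal S X Y"
    have c: "consistent S r" using assms(1) unfolding is_repair_def by blast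
    show "X = Y"
    proof (cases "X = A")
      case True
      then show ?thesis using n Y k by blast
    next
      case False
      then have "X \<in> r" using X by blast
      show ?thesis
      proof (cases "Y = A")
        case True
        then show ?thesis using n \<open>X \<in> r\<close> ke_sym[OF k] by blast
      next
        case False
        then have "Y \<in> r" using Y by blast
        then show ?thesis using c \<open>X \<in> r\<close> k unfolding consistent_def by blast
      qed
    qed
  qed
  ultimately show False using assms(1) unfolding is_repair_def by blast
qed

lemma atom_of_val:
  assumes "sjf_query S q" "b \<in> q"
  shows "atom_of q (val_atom \<theta> b) = b"
  unfolding atom_of_def
proof (rule the_equality)
  show "b \<in> q \<and> fst b = fst (val_atom \<theta> b)" using assms by (simp add: val_atom_def)
  fix a assume "a \<in> q \<and> fst a = fst (val_atom \<theta> b)"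
  then show "a = b" using assms unfolding sjf_query_def val_atom_def by auto
qed

theorem lemma15:
  fixes S :: "'r schema"
    and q q0 :: "('r, 'v, 'c) atom set"
    and db o1 o2 :: "('r, 'c) fact set"
  assumes "wf_schema S"
    and "sjf_query S q"
    and "q0 \<subseteq> q"
    and "is_database S q db"
    and "garbage_set S q q0 db o1"
    and "garbage_set S q q0 db o2"
  shows "garbage_set S q q0 db (o1 \<union> o2)"
proof -
  have s1: "o1 \<subseteq> db" and b1: "\<forall>A\<in>o1. atom_of q A \<in> q0 \<and> block S A db \<subseteq> o1"
    using assms(5) unfolding garbage_set_def by auto
  obtain r1 where r1: "is_repair S r1 o1"
    and g1: "\<forall>\<theta>::'v \<Rightarrow> 'c. val_query \<theta> q \<subseteq> (db - o1) \<union> r1 \<longrightarrow> val_query \<theta> q0 \<inter> r1 = {}"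
    using assms(5) unfolding garbage_set_def by blast
  have s2: "o2 \<subseteq> db" and b2: "\<forall>A\<in>o2. atom_of q A \<in> q0 \<and> block S A db \<subseteq> o2"
    using assms(6) unfolding garbage_set_def by auto
  obtain r2 where r2: "is_repair S r2 o2"
    and g2: "\<forall>\<theta>::'v \<Rightarrow> 'c. val_query \<theta> q \<subseteq> (db - o2) \<union> r2 \<longrightarrow> val_query \<theta> q0 \<inter> r2 = {}"
    using assms(6) unfolding garbage_set_def by blast
  define r where "r = r1 \<union> (r2 - o1)"
  have r1s: "r1 \<subseteq> o1" "consistent S r1" using r1 unfolding is_repair_def by auto
  have r2s: "r2 \<subseteq> o2" "consistent S r2" using r2 unfolding is_repair_def by auto
  have closed1: "B \<in> o1" if "A \<in> o1" "B \<in> db" "key_equal S A B" for A B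
  proof -
    have "B \<in> block S A db" unfolding block_def using that ke_sym[OF that(3)] by blast
    then show ?thesis using b1 that(1) by blast
  qed
  have cons: "consistent S r"
    unfolding consistent_def
  proof (intro ballI impI)
    fix A B assume A: "A \<in> r" and B: "B \<in> r" and k: "key_equal S A B"
    show "A = B"
    proof (cases "A \<in> r1")
      case True
      show ?thesis
      proof (cases "B \<in> r1")
        case True with \<open>A \<in> r1\<close> k r1s show ?thesis unfolding consistent_def by blast
      next
        case False
        then have "B \<in> r2" "B \<notin> o1" using B r_def by auto
        moreover have "B \<in> db" using \<open>B \<in> r2\<close> r2s s2 by blast
        ultimately show ?thesis using closed1[of A B] True r1s k by blast
      qed
    next
      case False
      then have A2: "A \<in> r2" "A \<notin> o1" using A r_def by auto
      show ?thesis
      proof (cases "B \<in> r1")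
        case True
        have "A \<in> db" using A2 r2s s2 by blast
        then show ?thesis using closed1[of B A] True r1s ke_sym[OF k] A2 by blast
      next
        case False
        then have "B \<in> r2" using B r_def by auto
        with A2 k r2s show ?thesis unfolding consistent_def by blast
      qed
    qed
  qed
  have rep: "is_repair S r (o1 \<union> o2)"
    unfolding is_repair_def
  proof (intro conjI allI impI)
    show "r \<subseteq> o1 \<union> o2" using r_def r1s r2s by blast
    show "consistent S r" by (rule cons)
    fix r' assume h: "r \<subset> r' \<and> r' \<subseteq> o1 \<union> o2"
    then obtain A where A: "A \<in> r'" "A \<notin> r" by blast
    have "\<exists>B\<in>r. key_equal S A B"
    proof (cases "A \<in> o1")
      case True
      then show ?thesis using repair_cover[OF r1 True] r_def by blast
    next
      case False
      then have "A \<in> o2" using A h by blast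
      from repair_cover[OF r2 this] obtain B where B: "B \<in> r2" "key_equal S A B" by blast
      have "B \<notin> o1"
      proof
        assume "B \<in> o1"
        moreover have "A \<in> db" using \<open>A \<in> o2\<close> s2 by blast
        ultimately show False using closed1[of B A] B ke_sym[OF B(2)] False by blast
      qed
      then show ?thesis using B r_def by blast
    qed
    then obtain B where "B \<in> r" "key_equal S A B" by blast
    moreover have "A \<noteq> B" using A \<open>B \<in> r\<close> by blast
    ultimately show "\<not> consistent S r'" using A h unfolding consistent_def by blast
  qed
  have main: "val_query \<theta> q0 \<inter> r = {}" if h: "val_query \<theta> q \<subseteq> (db - (o1 \<union> o2)) \<union> r" for \<theta> :: "'v \<Rightarrow> 'c"
  proof -
    have "val_query \<theta> q \<subseteq> (db - o1) \<union> r1"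
      using h r_def r2s s2 by blast
    then have e1: "val_query \<theta> q0 \<inter> r1 = {}" using g1 by blast
    have e1': "val_query \<theta> q \<inter> r1 = {}"
    proof (rule ccontr)
      assume "val_query \<theta> q \<inter> r1 \<noteq> {}"
      then obtain b where b: "b \<in> q" "val_atom \<theta> b \<in> r1" unfolding val_query_def by blast
      then have "atom_of q (val_atom \<theta> b) \<in> q0" using b1 r1s by blast
      then have "b \<in> q0" using atom_of_val[OF assms(2) b(1)] by simp
      then show False using e1 b unfolding val_query_def by blast
    qed
    have "val_query \<theta> q \<subseteq> (db - o2) \<union> r2"
      using h e1' r_def by blast
    then have e2: "val_query \<theta> q0 \<inter> r2 = {}" using g2 by blast
    show ?thesis using e1 e2 r_def by blast
  qed
  show ?thesis
    unfolding garbage_set_def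
  proof (intro conjI)
    show "o1 \<union> o2 \<subseteq> db" using s1 s2 by blast
    show "\<forall>A\<in>o1 \<union> o2. atom_of q A \<in> q0 \<and> block S A db \<subseteq> o1 \<union> o2" using b1 b2 by blast
    show "\<exists>r. is_repair S r (o1 \<union> o2) \<and>
        (\<forall>\<theta>::'v \<Rightarrow> 'c. val_query \<theta> q \<subseteq> (db - (o1 \<union> o2)) \<union> r \<longrightarrow> val_query \<theta> q0 \<inter> r = {})"
      using rep main by blast
  qed
qed

end
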